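(* Let $T_1$ and $T_2$ be two rooted binary trees, each with $n$ leaves labelled by the same set of $n$ distinct labels. Let $u_1,u_2,\dots,u_k$ be a root-to-leaf path of $\mathit{MCD}(T_1)$. Then $\sum_{i=1}^{k}|T_2(u_i)|=\mathrm{O}(n)$.
   Context: A rooted binary tree is one in which every internal node has exactly two children, a left and a right child. $|T|$ denotes the number of nodes of a tree $T$. A component of $T_1$ is a connected set of its nodes. An edge of $T_1$ crosses the boundary of $C$ if exactly one of its endpoints lies in $C$. It is an edge from below if its endpoint in $C$ is the parent endpoint. A centroid of a component $C$ is a node $u\in C$ such that every connected component of $C\setminus\{u\}$ has at most $|C|/2$ nodes. Removing a node $s$ from $C$ leaves at most three connected components: $C_l$ containing the left child of $s$, $C_r$ containing the right child of $s$, and $C_p$ containing the parent of $s$, each intersected with $C$ and possibly empty. The modified centroid decomposition $\mathit{MCD}(T_1)$ is a ternary tree built recursively, starting from the component $C=T_1$. For the current component $C$ a splitting node $s$ is chosen. If $C$ has no edge from below, $s$ is a centroid $c$ of $C$. Otherwise $C$ has exactly one edge $(x,y)$ from below with $x\in C$; let $c$ be a centroid of $C$, and let $s$ be the lowest common ancestor of $x$ and $c$. The node $u$ of $\mathit{MCD}(T_1)$ corresponding to $C$ stores $s$, and we write $C_u=C$. The children of $u$ are the nodes corresponding to the nonempty components among $C_l,C_r,C_p$ obtained by removing $s$ from $C$. For a node $u$ of $\mathit{MCD}(T_1)$, let $\Lambda=L(C_u)$ be the set of labels of the leaves of $T_1$ lying in $C_u$. Then $T_2(u)$ is the contraction of $T_2$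 with respect to $\Lambda$, obtained in three steps: 1. prune all leaves of $T_2$ whose labels are not in $\Lambda$; 2. repeatedly prune internal nodes that have no children; 3. repeatedly contract internal nodes that have exactly one child. The result is a binary tree with leaf set $\Lambda$. *)

theory Defs
  imports Main "HOL-Library.Sublist"
begin

datatype 'a btree = Leaf 'a | Node "'a btree" "'a btree"

fun leaves :: "'a btree \<Rightarrow> 'a list" where
  "leaves (Leaf a) = [a]"
| "leaves (Node l r) = leaves l @ leaves r"

text \<open>Nodes of a tree are identified with their positions: the list of
left (False) / right (True) turns from the root. Ancestor = prefix,
parent = butlast, left child = p @ [False], right child = p @ [True].\<close>
fun nodes :: "'a btree \<Rightarrow> bool list set" where
  "nodes (Leaf a) = {[]}"
| "nodes (Node l r) = {[]} \<union> (Cons False) ` nodes l \<union> (Cons True) ` nodes r"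

fun subtree :: "'a btree \<Rightarrow> bool list \<Rightarrow> 'a btree" where
  "subtree t [] = t"
| "subtree (Node l r) (False # p) = subtree l p"
| "subtree (Node l r) (True # p) = subtree r p"
| "subtree (Leaf a) (_ # p) = Leaf a"

fun tsize :: "'a btree \<Rightarrow> nat" where
  "tsize (Leaf a) = 1"
| "tsize (Node l r) = Suc (tsize l + tsize r)"

definition adj :: "bool list \<Rightarrow> bool list \<Rightarrow> bool" where
  "adj p q \<longleftrightarrow> (\<exists>b. q = p @ [b]) \<or> (\<exists>b. p = q @ [b])"

definition adjrel :: "bool list set \<Rightarrow> (bool list \<times> bool list) set" where
  "adjrel D = {(p, q). p \<in> D \<and> q \<in> D \<and> adj p q}"

definition comp :: "bool list set \<Rightarrow> bool list \<Rightarrow> bool list set" where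
  "comp D x = {y. x \<in> D \<and> (x, y) \<in> (adjrel D)\<^sup>*}"

definition centroid :: "bool list set \<Rightarrow> bool list \<Rightarrow> bool" where
  "centroid C u \<longleftrightarrow> u \<in> C \<and>
     (\<forall>x \<in> C - {u}. 2 * card (comp (C - {u}) x) \<le> card C)"

definition edges_below :: "'a btree \<Rightarrow> bool list set \<Rightarrow> (bool list \<times> bool list) set" where
  "edges_below T C = {(x, y). x \<in> C \<and> y \<in> nodes T - C \<and> (\<exists>b. y = x @ [b])}"

text \<open>Valid choices of the splitting node s of component C in the modified centroid
decomposition (any choice of centroid c is allowed).\<close>
definition split_ok :: "'a btree \<Rightarrow> bool list set \<Rightarrow> bool list \<Rightarrow> bool" where
  "split_ok T C s \<longleftrightarrow> (\<exists>c. centroid C c \<and>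
     ((edges_below T C = {} \<and> s = c) \<or>
      (\<exists>x y. edges_below T C = {(x, y)} \<and> s = longest_common_prefix x c)))"

definition mcd_children :: "bool list set \<Rightarrow> bool list \<Rightarrow> bool list set set" where
  "mcd_children C s =
     {comp (C - {s}) (s @ [False]), comp (C - {s}) (s @ [True]),
      (if s = [] then {} else comp (C - {s}) (butlast s))} - {{}}"

definition mcd_step :: "'a btree \<Rightarrow> bool list set \<Rightarrow> bool list set \<Rightarrow> bool" where
  "mcd_step T C C' \<longleftrightarrow> (\<exists>s. split_ok T C s \<and> C' \<in> mcd_children C s)"

definition mcd_leaf :: "'a btree \<Rightarrow> bool list set \<Rightarrow> bool" where
  "mcd_leaf T C \<longleftrightarrow> (\<exists>s. split_ok T C s \<and> mcd_children C s = {})"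

text \<open>A root-to-leaf path u_1..u_k of MCD(T), given by the components C_{u_1},...,C_{u_k}.\<close>
definition mcd_root_leaf_path :: "'a btree \<Rightarrow> bool list set list \<Rightarrow> bool" where
  "mcd_root_leaf_path T Cs \<longleftrightarrow> Cs \<noteq> [] \<and> hd Cs = nodes T \<and>
     (\<forall>i. Suc i < length Cs \<longrightarrow> mcd_step T (Cs ! i) (Cs ! Suc i)) \<and>
     mcd_leaf T (last Cs)"

definition leaf_labels :: "'a btree \<Rightarrow> bool list set \<Rightarrow> 'a set" where
  "leaf_labels T C = {a. \<exists>p \<in> C. p \<in> nodes T \<and> subtree T p = Leaf a}"

text \<open>Contraction of T2 w.r.t. a label set: prune leaves not in the set, prune
childless internal nodes, contract internal nodes with one child. None = empty tree.\<close>
fun contract :: "'a set \<Rightarrow> 'a btree \<Rightarrow> 'a btree option" where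
  "contract \<Lambda> (Leaf a) = (if a \<in> \<Lambda> then Some (Leaf a) else None)"
| "contract \<Lambda> (Node l r) =
     (case (contract \<Lambda> l, contract \<Lambda> r) of
        (None, None) \<Rightarrow> None
      | (Some t, None) \<Rightarrow> Some t
      | (None, Some t) \<Rightarrow> Some t
      | (Some t1, Some t2) \<Rightarrow> Some (Node t1 t2))"

definition osize :: "'a btree option \<Rightarrow> nat" where
  "osize t = (case t of None \<Rightarrow> 0 | Some t' \<Rightarrow> tsize t')"

definition contracted_size :: "'a btree \<Rightarrow> 'a btree \<Rightarrow> bool list set \<Rightarrow> nat" where
  "contracted_size T1 T2 C = osize (contract (leaf_labels T1 C) T2)"

end

theory Submission
  imports Defs
begin

lemma comp_sub: "comp D x \<subseteq> D"
proof
  fix y assume "y \<in> comp D x"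
  then have "(x, y) \<in> (adjrel D)\<^sup>*" "x \<in> D" by (auto simp: comp_def)
  then show "y \<in> D"
    by (induction rule: rtrancl_induct) (auto simp: adjrel_def)
qed

lemma comp_nonempty: "comp D x \<noteq> {} \<Longrightarrow> x \<in> D"
  by (auto simp: comp_def)

lemma comp_self: "x \<in> D \<Longrightarrow> x \<in> comp D x"
  by (auto simp: comp_def)

lemma sym_adjrel: "sym (adjrel D)"
  by (auto simp: sym_def adjrel_def adj_def)

lemma comp_closed: "y \<in> comp D x \<Longrightarrow> v \<in> D \<Longrightarrow> adj y v \<Longrightarrow> v \<in> comp D x"
proof -
  assume a: "y \<in> comp D x" "v \<in> D" "adj y v"
  then have "y \<in> D" using comp_sub by blast
  then have "(y, v) \<in> adjrel D" using a by (auto simp: adjrel_def)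
  then show ?thesis using a(1) by (auto simp: comp_def intro: rtrancl_into_rtrancl)
qed

lemma comp_eq: "c \<in> comp D z \<Longrightarrow> comp D c = comp D z"
proof -
  assume a: "c \<in> comp D z"
  then have z: "z \<in> D" and zc: "(z, c) \<in> (adjrel D)\<^sup>*" by (auto simp: comp_def)
  have c: "c \<in> D" using a comp_sub by blast
  have cz: "(c, z) \<in> (adjrel D)\<^sup>*" using zc sym_rtrancl[OF sym_adjrel] by (auto simp: sym_def)
  show ?thesis using z c zc cz unfolding comp_def
    by (auto intro: rtrancl_trans)
qed

lemma children_form:
  assumes "C' \<in> mcd_children C s"
  shows "\<exists>z. z \<in> C - {s} \<and> C' = comp (C - {s}) z"
proof -
  have ne: "C' \<noteq> {}" using assms by (auto simp: mcd_children_def)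
  have "C' = comp (C - {s}) (s @ [False]) \<or> C' = comp (C - {s}) (s @ [True]) \<or> (s \<noteq> [] \<and> C' = comp (C - {s}) (butlast s))"
    using assms by (auto simp: mcd_children_def split: if_splits)
  then show ?thesis using ne comp_nonempty by blast
qed

lemma comp_mono_avoid:
  assumes "c \<notin> comp (C - {s}) z" "y \<in> comp (C - {s}) z"
  shows "y \<in> comp (C - {c}) z"
proof -
  have z: "z \<in> C - {s}" and p: "(z, y) \<in> (adjrel (C - {s}))\<^sup>*" using assms(2) by (auto simp: comp_def)
  have "(z, y) \<in> (adjrel (C - {c}))\<^sup>* \<and> y \<in> comp (C - {s}) z" using p
  proof (induction rule: rtrancl_induct)
    case base then show ?case using z by (auto simp: comp_def)
  next
    case (step y v)
    have v: "v \<in> comp (C - {s}) z" using step z by (auto simp: comp_def intro: rtrancl_into_rtrancl[OF step(1)])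
    have "y \<noteq> c" "v \<noteq> c" using step.IH v assms(1) by auto
    then have "(y, v) \<in> adjrel (C - {c})" using step(2) by (auto simp: adjrel_def)
    then show ?case using step.IH v by (auto intro: rtrancl_into_rtrancl)
  qed
  then show ?thesis using z assms(1) comp_self[of z "C - {s}"] by (auto simp: comp_def)
qed

lemma prefix_inv:
  assumes "(c, y) \<in> (adjrel (C - {s}))\<^sup>*" "prefix (s @ [b]) c"
  shows "prefix (s @ [b]) y"
  using assms
proof (induction rule: rtrancl_induct)
  case base then show ?case by simp
next
  case (step y v)
  then have a: "adj y v" "v \<noteq> s" by (auto simp: adjrel_def)
  from a(1) show ?case unfolding adj_def
  proof
    assume "\<exists>b'. v = y @ [b']" then show ?thesis using step.IH step.prems by auto
  next
    assume "\<exists>b'. y = v @ [b']"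
    then obtain b' where yv: "y = v @ [b']" by blast
    have "prefix (s @ [b]) (v @ [b'])" using step.IH step.prems yv by simp
    then have "s @ [b] = v @ [b'] \<or> prefix (s @ [b]) v" by (simp only: prefix_snoc)
    then show ?thesis using a(2) by auto
  qed
qed

lemma step_prop:
  assumes fin: "finite C" and ok: "split_ok T C s" and ch: "C' \<in> mcd_children C s"
  shows "C' \<subseteq> C \<and> (2 * card C' \<le> card C \<or> edges_below T C' = {}) \<and>
         (edges_below T C = {} \<longrightarrow> 2 * card C' \<le> card C)"
proof -
  obtain z where z: "z \<in> C - {s}" and C': "C' = comp (C - {s}) z" using children_form[OF ch] by blast
  have sub: "C' \<subseteq> C - {s}" using C' comp_sub by blast
  obtain c where cen: "centroid C c" and
    cases: "(edges_below T C = {} \<and> s = c) \<or> (\<exists>x y. edges_below T C = {(x, y)} \<and> s = longest_common_prefix x c)"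
    using ok by (auto simp: split_ok_def)
  have cC: "c \<in> C" using cen by (auto simp: centroid_def)
  have half: "2 * card C' \<le> card C" if nc: "c \<notin> C'"
  proof -
    have "C' \<subseteq> comp (C - {c}) z" using comp_mono_avoid[of c C s z] nc C' by blast
    moreover have "z \<in> C - {c}" using z nc C' comp_self[of z "C - {s}"] by auto
    then have "2 * card (comp (C - {c}) z) \<le> card C" using cen by (auto simp: centroid_def)
    moreover have "finite (comp (C - {c}) z)" using fin comp_sub[of "C - {c}" z] finite_subset by blast
    ultimately show ?thesis using card_mono by (meson le_trans mult_le_mono2)
  qed
  show ?thesis
  proof (cases "c \<in> C'")
    case False
    then show ?thesis using sub half by auto
  next
    case True
    then have cs: "c \<noteq> s" using sub by auto
    from True cases obtain x y where eb: "edges_below T C = {(x, y)}" and sx: "s = longest_common_prefix x c"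
      using sub by auto
    have "prefix s c" using sx longest_common_prefix_prefix2 by metis
    then obtain b rest where crest: "c = s @ b # rest" using cs
      by (metis append.right_neutral neq_Nil_conv prefix_def)
    have pc: "prefix (s @ [b]) c" using crest by simp
    have CC': "C' = comp (C - {s}) c" using comp_eq True C' by metis
    have allp: "prefix (s @ [b]) q" if "q \<in> C'" for q
    proof -
      have "(c, q) \<in> (adjrel (C - {s}))\<^sup>*" using that CC' by (auto simp: comp_def)
      then show ?thesis using prefix_inv pc by blast
    qed
    have "edges_below T C' = {}"
    proof (rule ccontr)
      assume "edges_below T C' \<noteq> {}"
      then obtain p q bb where p: "p \<in> C'" and q: "q \<in> nodes T" "q \<notin> C'" and qp: "q = p @ [bb]"
        by (auto simp: edges_below_def)
      show False
      proof (cases "q \<in> C")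
        case True
        show False
        proof (cases "q = s")
          case True
          have "prefix (s @ [b]) p" using allp p by blast
          then have "length (s @ [b]) \<le> length p" by (rule prefix_length_le)
          moreover have "length s = Suc (length p)" using True qp by (metis length_append_singleton)
          ultimately show False by simp
        next
          case False
          then have "q \<in> comp (C - {s}) z" using comp_closed[of p "C - {s}" z q] p C' `q \<in> C`
            by (auto simp: adj_def qp)
          then show False using q C' by simp
        qed
      next
        case False
        then have "(p, q) \<in> edges_below T C" using p sub q qp by (auto simp: edges_below_def)
        then have "p = x" using eb by auto
        then have "prefix (s @ [b]) x" using allp p by blast
        then have "prefix (s @ [b]) s" using pc sx longest_common_prefix_max_prefix by metis
        then show False by (metis prefix_length_le length_append_singleton not_less_eq_eq order_refl)
      qed
    qed
    moreover have "edges_below T C \<noteq> {}" using eb by auto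
    ultimately show ?thesis using sub by auto
  qed
qed

lemma geo:
  "xs \<noteq> [] \<Longrightarrow> (\<forall>i. Suc i < length xs \<longrightarrow>
      (2 * f (xs ! Suc i) \<le> (f (xs ! i) :: nat) \<or> (f (xs ! Suc i) \<le> f (xs ! i) \<and> g (xs ! Suc i))) \<and>
      (g (xs ! i) \<longrightarrow> 2 * f (xs ! Suc i) \<le> f (xs ! i))) \<Longrightarrow>
   sum_list (map f xs) \<le> 4 * f (hd xs) \<and> (g (hd xs) \<longrightarrow> sum_list (map f xs) \<le> 3 * f (hd xs))"
proof (induction xs)
  case Nil then show ?case by simp
next
  case (Cons a xs)
  show ?case
  proof (cases "xs = []")
    case True then show ?thesis by simp
  next
    case False
    have h: "\<forall>i. Suc i < length xs \<longrightarrow>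
      (2 * f (xs ! Suc i) \<le> f (xs ! i) \<or> (f (xs ! Suc i) \<le> f (xs ! i) \<and> g (xs ! Suc i))) \<and>
      (g (xs ! i) \<longrightarrow> 2 * f (xs ! Suc i) \<le> f (xs ! i))"
    proof (intro allI impI)
      fix i assume "Suc i < length xs"
      then show "(2 * f (xs ! Suc i) \<le> f (xs ! i) \<or> (f (xs ! Suc i) \<le> f (xs ! i) \<and> g (xs ! Suc i))) \<and>
      (g (xs ! i) \<longrightarrow> 2 * f (xs ! Suc i) \<le> f (xs ! i))" using Cons.prems(2)[rule_format, of "Suc i"] by simp
    qed
    have IH: "sum_list (map f xs) \<le> 4 * f (hd xs) \<and> (g (hd xs) \<longrightarrow> sum_list (map f xs) \<le> 3 * f (hd xs))"
      using Cons.IH[OF False h] .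
    have hd: "hd xs = (a # xs) ! Suc 0" "a = (a # xs) ! 0" using False by (auto simp: hd_conv_nth)
    have r: "(2 * f (hd xs) \<le> f a \<or> (f (hd xs) \<le> f a \<and> g (hd xs))) \<and> (g a \<longrightarrow> 2 * f (hd xs) \<le> f a)"
      using Cons.prems(2)[rule_format, of 0] False hd by simp
    show ?thesis using r IH by auto
  qed
qed

lemma card_nodes: "finite (nodes t) \<and> card (nodes t) = tsize t"
proof (induction t)
  case (Leaf a) then show ?case by simp
next
  case (Node l r)
  have d: "(Cons False ` nodes l) \<inter> (Cons True ` nodes r) = {}" by auto
  have e: "[] \<notin> (Cons False ` nodes l) \<union> (Cons True ` nodes r)" by auto
  have "card ((Cons False ` nodes l) \<union> (Cons True ` nodes r)) = tsize l + tsize r"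
    using Node d by (simp add: card_Un_disjoint card_image)
  then show ?case using Node e by simp
qed

lemma tsize_leaves: "tsize t + 1 = 2 * length (leaves t)"
  by (induction t) auto

lemma leaves_sub: "contract L t = Some t' \<Longrightarrow> set (leaves t') \<subseteq> set (leaves t)"
  by (induction t arbitrary: t') (auto split: option.splits if_splits)

lemma contract_size:
  "distinct (leaves t) \<Longrightarrow> contract L t = Some t' \<Longrightarrow> tsize t' + 1 \<le> 2 * card (L \<inter> set (leaves t))"
proof (induction t arbitrary: t')
  case (Leaf a) then show ?case by (auto split: if_splits)
next
  case (Node l r)
  have dl: "distinct (leaves l)" and dr: "distinct (leaves r)" and disj: "set (leaves l) \<inter> set (leaves r) = {}"
    using Node.prems by auto
  have mono_l: "card (L \<inter> set (leaves l)) \<le> card (L \<inter> set (leaves (Node l r)))"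
    by (rule card_mono) auto
  have mono_r: "card (L \<inter> set (leaves r)) \<le> card (L \<inter> set (leaves (Node l r)))"
    by (rule card_mono) auto
  have un: "card (L \<inter> set (leaves (Node l r))) = card (L \<inter> set (leaves l)) + card (L \<inter> set (leaves r))"
  proof -
    have "L \<inter> set (leaves (Node l r)) = (L \<inter> set (leaves l)) \<union> (L \<inter> set (leaves r))" by auto
    then show ?thesis using disj by (simp add: card_Un_disjoint disjoint_iff)
  qed
  show ?case
  proof (cases "contract L l")
    case None
    then show ?thesis using Node.prems(2) Node.IH(2)[OF dr] mono_r
      by (auto split: option.splits)
  next
    case (Some tl)
    show ?thesis
    proof (cases "contract L r")
      case None
      then show ?thesis using Some Node.prems(2) Node.IH(1)[OF dl] mono_l by auto
    next
      case (Some tr)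
      then show ?thesis using \<open>contract L l = Some tl\<close> Node.prems(2) Node.IH(1)[OF dl] Node.IH(2)[OF dr] un
        by fastforce
    qed
  qed
qed

lemma cs_bound:
  assumes "finite C" "distinct (leaves T2)"
  shows "contracted_size T1 T2 C \<le> 2 * card C"
proof -
  define lab where "lab p = (case subtree T1 p of Leaf a \<Rightarrow> a | Node _ _ \<Rightarrow> undefined)" for p
  have "leaf_labels T1 C \<subseteq> lab ` C" unfolding leaf_labels_def lab_def by force
  then have fl: "finite (leaf_labels T1 C)" and cl: "card (leaf_labels T1 C) \<le> card C"
    using assms(1) finite_subset card_image_le card_mono
    by (blast, metis finite_imageI le_trans)
  have "contracted_size T1 T2 C \<le> 2 * card (leaf_labels T1 C \<inter> set (leaves T2))"
    unfolding contracted_size_def osize_def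
  proof (cases "contract (leaf_labels T1 C) T2")
    case (Some t')
    then show "(case contract (leaf_labels T1 C) T2 of None \<Rightarrow> 0 | Some t' \<Rightarrow> tsize t') \<le> 2 * card (leaf_labels T1 C \<inter> set (leaves T2))"
      using contract_size[OF assms(2) Some] by simp
  qed simp
  also have "\<dots> \<le> 2 * card (leaf_labels T1 C)" using fl by (simp add: card_mono)
  finally show ?thesis using cl by simp
qed

theorem lemma3:
  "\<exists>c::nat. \<forall>(T1::'a btree) (T2::'a btree) n Cs.
     length (leaves T1) = n \<and> length (leaves T2) = n \<and>
     distinct (leaves T1) \<and> distinct (leaves T2) \<and>
     set (leaves T1) = set (leaves T2) \<and>
     mcd_root_leaf_path T1 Cs \<longrightarrow>
     (\<Sum>i<length Cs. contracted_size T1 T2 (Cs ! i)) \<le> c * n"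
proof (intro exI[of _ 16] allI impI)
  fix T1 T2 :: "'a btree" and n Cs
  assume A: "length (leaves T1) = n \<and> length (leaves T2) = n \<and>
     distinct (leaves T1) \<and> distinct (leaves T2) \<and>
     set (leaves T1) = set (leaves T2) \<and> mcd_root_leaf_path T1 Cs"
  then have d2: "distinct (leaves T2)" and P: "mcd_root_leaf_path T1 Cs" and n: "length (leaves T1) = n" by auto
  have ne: "Cs \<noteq> []" and hd: "hd Cs = nodes T1"
    and st: "\<And>i. Suc i < length Cs \<Longrightarrow> mcd_step T1 (Cs ! i) (Cs ! Suc i)"
    using P by (auto simp: mcd_root_leaf_path_def)
  have fn: "finite (nodes T1)" using card_nodes by blast
  have subn: "Cs ! i \<subseteq> nodes T1" if "i < length Cs" for i
    using that
  proof (induction i)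
    case 0 then show ?case using hd ne by (simp add: hd_conv_nth)
  next
    case (Suc i)
    obtain s where "split_ok T1 (Cs ! i) s" "Cs ! Suc i \<in> mcd_children (Cs ! i) s"
      using st[OF Suc.prems] by (auto simp: mcd_step_def)
    then have "Cs ! Suc i \<subseteq> Cs ! i" using step_prop[of "Cs ! i" T1 s "Cs ! Suc i"] Suc fn finite_subset by auto
    then show ?case using Suc by auto
  qed
  have fin: "finite (Cs ! i)" if "i < length Cs" for i using subn[OF that] fn finite_subset by blast
  have G: "sum_list (map card Cs) \<le> 4 * card (hd Cs) \<and>
     ((edges_below T1 (hd Cs) = {}) \<longrightarrow> sum_list (map card Cs) \<le> 3 * card (hd Cs))"
  proof (rule geo[OF ne], intro allI impI)
    fix i assume i: "Suc i < length Cs"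
    obtain s where "split_ok T1 (Cs ! i) s" "Cs ! Suc i \<in> mcd_children (Cs ! i) s"
      using st[OF i] by (auto simp: mcd_step_def)
    then have sp: "Cs ! Suc i \<subseteq> Cs ! i \<and> (2 * card (Cs ! Suc i) \<le> card (Cs ! i) \<or> edges_below T1 (Cs ! Suc i) = {}) \<and>
         (edges_below T1 (Cs ! i) = {} \<longrightarrow> 2 * card (Cs ! Suc i) \<le> card (Cs ! i))"
      using step_prop fin[of i] i by simp
    moreover have "card (Cs ! Suc i) \<le> card (Cs ! i)" using sp fin[of i] i card_mono by auto
    ultimately show "(2 * card (Cs ! Suc i) \<le> card (Cs ! i) \<or>
          card (Cs ! Suc i) \<le> card (Cs ! i) \<and> edges_below T1 (Cs ! Suc i) = {}) \<and>
         (edges_below T1 (Cs ! i) = {} \<longrightarrow> 2 * card (Cs ! Suc i) \<le> card (Cs ! i))" by auto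
  qed
  have "(\<Sum>i<length Cs. contracted_size T1 T2 (Cs ! i)) \<le> (\<Sum>i<length Cs. 2 * card (Cs ! i))"
    by (rule sum_mono) (use cs_bound[OF fin d2] in auto)
  also have "\<dots> = 2 * sum_list (map card Cs)"
    by (simp add: sum_list_sum_nth atLeast0LessThan sum_distrib_left)
  also have "\<dots> \<le> 8 * card (nodes T1)" using G hd by simp
  also have "\<dots> = 8 * tsize T1" using card_nodes by metis
  also have "\<dots> \<le> 16 * n" using tsize_leaves[of T1] n by simp
  finally show "(\<Sum>i<length Cs. contracted_size T1 T2 (Cs ! i)) \<le> 16 * n" .
qed

end
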